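(* Let $a\neq 0$ be a real number and let $(P_n(x))_{n\ge0}$ be a sequence of polynomials such that $$\sum_{n\ge0}P_n(x)\frac{t^n}{n!}=f(t)e^{xt}$$ for some $f$ holomorphic at $0$ with $f(0)\neq0$, and such that $P_n(a-x)=(-1)^nP_n(x)$ for all $n\ge0$. Let $(a_k)_{k\in\mathbb{N}}$ be a sequence of real numbers such that the power series $F(t)=f(t)-\sum_{k\ge0}a_k\frac{t^k}{k!}$ (with $f$ replaced by its Taylor series at $0$) is odd or even. Then for every $n\ge0$: $$P_n(x)=\sum_{\substack{0\le k\le n\\ k\text{ even}}}a_k\binom{n}{k}a^{n-k}E_{n-k}\!\left(\frac{x}{a}\right)\quad\text{if }F\text{ is odd},$$ $$P_n(x)=-2\sum_{\substack{1\le k\le n+1\\ k\text{ odd}}}\frac{a_k}{k}\binom{n}{k-1}a^{n-k}B_{n-k+1}\!\left(\frac{x}{a}\right)\quad\text{if }F\text{ is even}.$$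
   Context: $B_n(x)$ and $E_n(x)$ denote the Bernoulli and Euler polynomials, defined by $\sum_{n\ge0}B_n(x)\frac{t^n}{n!}=\frac{te^{xt}}{e^t-1}$ and $\sum_{n\ge0}E_n(x)\frac{t^n}{n!}=\frac{2e^{xt}}{e^t+1}$. *)

theory Defs
  imports "HOL-Analysis.Analysis" "HOL-Computational_Algebra.Formal_Power_Series"
    "HOL-Computational_Algebra.Polynomial"
begin

definition bernpoly :: "nat \<Rightarrow> real \<Rightarrow> real" where
  "bernpoly n x = fact n * fps_nth (fps_X * fps_exp x / (fps_exp 1 - 1)) n"

definition eulerpoly :: "nat \<Rightarrow> real \<Rightarrow> real" where
  "eulerpoly n x = fact n * fps_nth (2 * fps_exp x / (fps_exp 1 + 1)) n"

definition taylor_fps :: "(complex \<Rightarrow> complex) \<Rightarrow> complex fps" where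
  "taylor_fps f = Abs_fps (\<lambda>k. (deriv ^^ k) f 0 / fact k)"

text \<open>A formal power series F is odd (F(-t) = -F(t)) iff its even coefficients vanish,
  even (F(-t) = F(t)) iff its odd coefficients vanish.\<close>
definition fps_is_odd :: "'a::comm_ring_1 fps \<Rightarrow> bool" where
  "fps_is_odd F \<longleftrightarrow> (\<forall>k. even k \<longrightarrow> fps_nth F k = 0)"

definition fps_is_even :: "'a::comm_ring_1 fps \<Rightarrow> bool" where
  "fps_is_even F \<longleftrightarrow> (\<forall>k. odd k \<longrightarrow> fps_nth F k = 0)"

end

theory Submission imports Defs begin

definition scl :: "real \<Rightarrow> real fps \<Rightarrow> complex fps" where
  "scl a F = Abs_fps (\<lambda>n. complex_of_real (a ^ n * fps_nth F n))"

lemma scl_nth: "fps_nth (scl a F) n = complex_of_real (a ^ n * fps_nth F n)"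
  by (simp add: scl_def)

lemma scl_mult: "scl a (F * G) = scl a F * scl a G"
proof (rule fps_ext)
  fix n
  have "fps_nth (scl a (F * G)) n = of_real (\<Sum>i=0..n. (a^i * fps_nth F i) * (a^(n-i) * fps_nth G (n-i)))"
    by (simp add: scl_nth fps_mult_nth sum_distrib_left algebra_simps power_add[symmetric])
  also have "\<dots> = fps_nth (scl a F * scl a G) n"
    by (simp add: fps_mult_nth scl_nth)
  finally show "fps_nth (scl a (F * G)) n = fps_nth (scl a F * scl a G) n" .
qed

lemma scl_add: "scl a (F + G) = scl a F + scl a G"
  by (rule fps_ext) (simp add: scl_nth algebra_simps)

lemma scl_diff: "scl a (F - G) = scl a F - scl a G"
  by (rule fps_ext) (simp add: scl_nth algebra_simps)

lemma scl_1: "scl a 1 = 1"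
  by (rule fps_ext) (simp add: scl_nth)

lemma scl_2: "scl a 2 = 2"
  by (rule fps_ext) (simp add: scl_nth numeral_fps_const)

lemma scl_X: "scl a fps_X = fps_const (of_real a) * fps_X"
  by (rule fps_ext) (simp add: scl_nth fps_X_def)

lemma scl_exp: "scl a (fps_exp y) = fps_exp (of_real (a * y))"
  by (rule fps_ext) (simp add: scl_nth power_mult_distrib)

lemma expansion_unique:
  fixes g :: "complex \<Rightarrow> complex"
  assumes "g has_fps_expansion F" "g has_fps_expansion G" shows "F = G"
  using fps_nth_fps_expansion[OF assms(1)] fps_nth_fps_expansion[OF assms(2)]
  by (intro fps_ext) simp

lemma sums_expansion:
  fixes g :: "complex \<Rightarrow> complex"
  assumes "\<exists>r>0. \<forall>t::complex. norm t < r \<longrightarrow> (\<lambda>n. b n * t ^ n) sums g t"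
  shows "g has_fps_expansion Abs_fps b"
proof (rule has_fps_expansionI)
  from assms obtain r where r: "r > 0" "\<forall>t::complex. norm t < r \<longrightarrow> (\<lambda>n. b n * t ^ n) sums g t" by blast
  have "eventually (\<lambda>t::complex. t \<in> ball 0 r) (nhds 0)"
    using r(1) by (intro eventually_nhds_in_open) auto
  hence "eventually (\<lambda>t::complex. norm t < r) (nhds 0)"
    by (rule eventually_mono) (simp add: dist_norm)
  then show "\<forall>\<^sub>F u in nhds 0. (\<lambda>n. fps_nth (Abs_fps b) n * u ^ n) sums g u"
    by eventually_elim (use r in auto)
qed

lemma term_odd:
  fixes c a h :: real
  assumes "k \<le> n"
  shows "fact n * (c / fact k) * (a^(n-k) * h) = c * real (n choose k) * a^(n-k) * (fact (n-k) * h)"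
proof -
  have "(fact n::real) = fact k * fact (n-k) * real (n choose k)"
    by (metis binomial_fact_lemma[OF assms] of_nat_fact of_nat_mult)
  thus ?thesis by (simp add: field_simps)
qed

lemma term_even:
  fixes c a h :: real
  assumes "1 \<le> k" "k \<le> n + 1" "a \<noteq> 0"
  shows "fact n / a * (c / fact k) * (a^(n+1-k) * h) =
         c / real k * real (n choose (k-1)) * a powi (int n - int k) * (fact (n+1-k) * h)"
proof -
  have "(fact n::real) = fact (k-1) * fact (n-(k-1)) * real (n choose (k-1))"
    using assms by (metis binomial_fact_lemma le_diff_conv of_nat_fact of_nat_mult)
  moreover have "n - (k-1) = n + 1 - k" using assms by simp
  moreover have "(fact k :: real) = real k * fact (k-1)"
    using assms by (metis fact_num_eq_if not_one_le_zero of_nat_0 of_nat_eq_iff)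
  moreover have "a powi (int n - int k) = a^(n+1-k) / a"
  proof -
    have "int n - int k = int (n+1-k) - 1" using assms by simp
    moreover have "a^(n+1) = a^(n+1-k) * a^k" using assms by (simp add: power_add[symmetric])
    ultimately show ?thesis using assms by (simp add: power_int_diff field_simps)
  qed
  ultimately show ?thesis using assms by (simp add: field_simps)
qed

theorem mainTheorem4:
  fixes a :: real and P :: "nat \<Rightarrow> real poly" and f :: "complex \<Rightarrow> complex"
    and c :: "nat \<Rightarrow> real"
  assumes "a \<noteq> 0"
    and "f analytic_on {0}" and "f 0 \<noteq> 0"
    and "\<forall>x::real. \<exists>r>0. \<forall>t::complex. norm t < r \<longrightarrow>
           (\<lambda>n. complex_of_real (poly (P n) x) * t ^ n / fact n) sums (f t * exp (complex_of_real x * t))"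
    and "\<forall>n x. poly (P n) (a - x) = (-1) ^ n * poly (P n) x"
  shows "(fps_is_odd (taylor_fps f - Abs_fps (\<lambda>k. complex_of_real (c k) / fact k)) \<longrightarrow>
            (\<forall>n x. poly (P n) x =
               (\<Sum>k | k \<le> n \<and> even k. c k * of_nat (n choose k) * a ^ (n - k) * eulerpoly (n - k) (x / a))))
       \<and> (fps_is_even (taylor_fps f - Abs_fps (\<lambda>k. complex_of_real (c k) / fact k)) \<longrightarrow>
            (\<forall>n x. poly (P n) x =
               - 2 * (\<Sum>k | 1 \<le> k \<and> k \<le> n + 1 \<and> odd k.
                   c k / of_nat k * of_nat (n choose (k - 1)) * a powi (int n - int k)
                   * bernpoly (n + 1 - k) (x / a))))"
proof -
  define Q :: "real \<Rightarrow> complex fps" where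
    "Q x = Abs_fps (\<lambda>n. complex_of_real (poly (P n) x) / fact n)" for x
  have expQ: "(\<lambda>t. f t * exp (complex_of_real x * t)) has_fps_expansion Q x" for x
    unfolding Q_def
  proof (rule sums_expansion)
    from assms(4) obtain r where r: "r > 0" "\<forall>t::complex. norm t < r \<longrightarrow>
           (\<lambda>n. complex_of_real (poly (P n) x) * t ^ n / fact n) sums (f t * exp (complex_of_real x * t))"
      by blast
    show "\<exists>r>0. \<forall>t. cmod t < r \<longrightarrow> (\<lambda>n. complex_of_real (poly (P n) x) / fact n * t ^ n) sums (f t * exp (complex_of_real x * t))"
      using r by (intro exI[of _ r]) (simp add: field_simps)
  qed
  have f_exp: "f has_fps_expansion Q 0" using expQ[of 0] by simp
  have tay: "taylor_fps f = Q 0"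
    unfolding taylor_fps_def using fps_nth_fps_expansion[OF f_exp] by (intro fps_ext) simp
  have QE: "Q x = Q 0 * fps_exp (complex_of_real x)" for x
    by (rule expansion_unique[OF expQ has_fps_expansion_mult[OF f_exp has_fps_expansion_exp]])
  define N where "N = Abs_fps (\<lambda>n. (-1)^n * fps_nth (Q 0) n)"
  have QaN: "Q a = N"
  proof (rule fps_ext)
    fix n
    have "poly (P n) a = (-1)^n * poly (P n) 0" using assms(5)[rule_format, of n 0] by simp
    thus "fps_nth (Q a) n = fps_nth N n" by (simp add: Q_def N_def)
  qed
  define Cf where "Cf = Abs_fps (\<lambda>k. complex_of_real (c k) / fact k)"
  define Ea where "Ea = fps_exp (complex_of_real a)"
  have Ea_N: "Q 0 * Ea = N" using QE[of a] QaN by (simp add: Ea_def)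
  show ?thesis
  proof (intro conjI impI allI)
    fix n x
    assume odd_hyp: "fps_is_odd (taylor_fps f - Abs_fps (\<lambda>k. complex_of_real (c k) / fact k))"
    define Ce where "Ce = Abs_fps (\<lambda>k. if even k then fps_nth Cf k else 0)"
    have "Q 0 + N = 2 * Ce"
    proof (rule fps_ext)
      fix k
      have "even k \<Longrightarrow> fps_nth (Q 0) k = fps_nth Cf k"
        using odd_hyp unfolding fps_is_odd_def tay Cf_def by simp
      thus "fps_nth (Q 0 + N) k = fps_nth (2 * Ce) k"
        by (auto simp: N_def Ce_def)
    qed
    define Hr :: "real fps" where "Hr = 2 * fps_exp (x/a) / (fps_exp 1 + 1)"
    have "Hr * (fps_exp 1 + 1) = 2 * fps_exp (x/a)"
      unfolding Hr_def by (rule fps_times_divide_eq) (auto simp: fps_eq_iff[of _ 0] intro!: exI[of _ 0])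
    hence "scl a (Hr * (fps_exp 1 + 1)) = scl a (2 * fps_exp (x/a))" by simp
    hence D: "scl a Hr * (Ea + 1) = 2 * fps_exp (complex_of_real x)"
      using assms(1) by (simp add: scl_mult scl_add scl_1 scl_2 scl_exp Ea_def)
    have "Q x * (Ea + 1) = fps_exp (complex_of_real x) * (Q 0 * Ea + Q 0)"
      by (subst QE) (simp add: ring_distribs mult_ac)
    also have "\<dots> = fps_exp (complex_of_real x) * (2 * Ce)"
      using Ea_N \<open>Q 0 + N = 2 * Ce\<close> by (simp add: add.commute)
    also have "\<dots> = Ce * (scl a Hr * (Ea + 1))" using D by (simp add: mult_ac)
    finally have "(Q x - Ce * scl a Hr) * (Ea + 1) = 0" by (simp add: left_diff_distrib mult_ac)
    moreover have "Ea + 1 \<noteq> 0"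
      by (auto simp: Ea_def fps_eq_iff[of _ 0] intro!: exI[of _ 0])
    ultimately have QxD: "Q x = Ce * scl a Hr" by simp
    have "complex_of_real (poly (P n) x) / fact n = fps_nth (Ce * scl a Hr) n"
      using QxD by (simp add: Q_def fps_eq_iff)
    also have "\<dots> = complex_of_real (\<Sum>i=0..n. (if even i then c i / fact i else 0) * (a^(n-i) * fps_nth Hr (n-i)))"
      by (auto simp add: fps_mult_nth Ce_def Cf_def scl_nth intro!: sum.cong)
    finally have "poly (P n) x = fact n * (\<Sum>i=0..n. (if even i then c i / fact i else 0) * (a^(n-i) * fps_nth Hr (n-i)))"
      by (simp add: field_simps del: of_real_sum) (metis of_real_eq_iff of_real_mult of_real_fact)
    also have "\<dots> = (\<Sum>i=0..n. if even i then c i * of_nat (n choose i) * a ^ (n - i) * eulerpoly (n - i) (x / a) else 0)"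
      unfolding sum_distrib_left
    proof (intro sum.cong refl)
      fix i assume "i \<in> {0..n}"
      thus "fact n * ((if even i then c i / fact i else 0) * (a ^ (n - i) * fps_nth Hr (n - i))) =
        (if even i then c i * of_nat (n choose i) * a ^ (n - i) * eulerpoly (n - i) (x / a) else 0)"
        using term_odd[of i n "c i" a "fps_nth Hr (n-i)"] by (simp add: eulerpoly_def Hr_def)
    qed
    also have "\<dots> = (\<Sum>k | k \<le> n \<and> even k. c k * of_nat (n choose k) * a ^ (n - k) * eulerpoly (n - k) (x / a))"
      by (subst sum.inter_filter[symmetric]) (auto intro!: sum.cong)
    finally show "poly (P n) x = (\<Sum>k | k \<le> n \<and> even k. c k * of_nat (n choose k) * a ^ (n - k) * eulerpoly (n - k) (x / a))" .
  next
    fix n x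
    assume even_hyp: "fps_is_even (taylor_fps f - Abs_fps (\<lambda>k. complex_of_real (c k) / fact k))"
    show "poly (P n) x = - 2 * (\<Sum>k | 1 \<le> k \<and> k \<le> n + 1 \<and> odd k.
                   c k / of_nat k * of_nat (n choose (k - 1)) * a powi (int n - int k)
                   * bernpoly (n + 1 - k) (x / a))"
    proof -
    define Co where "Co = Abs_fps (\<lambda>k. if odd k then fps_nth Cf k else 0)"
    have "N - Q 0 = - 2 * Co"
    proof (rule fps_ext)
      fix k
      have "odd k \<Longrightarrow> fps_nth (Q 0) k = fps_nth Cf k"
        using even_hyp unfolding fps_is_even_def tay Cf_def by simp
      thus "fps_nth (N - Q 0) k = fps_nth (- 2 * Co) k"
        by (auto simp: N_def Co_def)
    qed
    define g :: "real fps" where "g = fps_exp 1 - 1"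
    define h :: "real fps" where "h = fps_X * fps_exp (x/a)"
    define Br :: "real fps" where "Br = h / g"
    have g1: "fps_nth g 1 = 1" by (simp add: g_def)
    have h1: "fps_nth h 1 = 1" by (simp add: h_def)
    have "g \<noteq> 0" using g1 by auto
    moreover have "h \<noteq> 0" using h1 by auto
    moreover have "subdegree g \<le> 1" using g1 by (intro subdegree_leI) simp
    moreover have "subdegree h \<ge> 1" using \<open>h \<noteq> 0\<close> by (intro subdegree_geI) (auto simp: h_def)
    ultimately have "Br * g = h" unfolding Br_def by (intro fps_times_divide_eq) auto
    hence "scl a (Br * g) = scl a h" by simp
    hence D: "scl a Br * (Ea - 1) = fps_const (complex_of_real a) * fps_X * fps_exp (complex_of_real x)"
      using assms(1) by (simp add: scl_mult scl_diff scl_1 scl_X scl_exp Ea_def g_def h_def)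
    have "Q x * (Ea - 1) = fps_exp (complex_of_real x) * (Q 0 * Ea - Q 0)"
      by (subst QE) (simp add: ring_distribs mult_ac)
    also have "\<dots> = fps_exp (complex_of_real x) * (- 2 * Co)"
      using Ea_N \<open>N - Q 0 = - 2 * Co\<close> by simp
    finally have E1: "Q x * (Ea - 1) = fps_exp (complex_of_real x) * (- 2 * Co)" .
    have "(Q x * (fps_const (complex_of_real a) * fps_X) + 2 * Co * scl a Br) * (Ea - 1)
        = (Q x * (Ea - 1)) * (fps_const (complex_of_real a) * fps_X) + 2 * Co * (scl a Br * (Ea - 1))"
      by (simp add: ring_distribs mult_ac)
    also have "\<dots> = 0" unfolding E1 D by (simp add: ring_distribs mult_ac)
    finally have "(Q x * (fps_const (complex_of_real a) * fps_X) + 2 * Co * scl a Br) * (Ea - 1) = 0" .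
    moreover have "Ea - 1 \<noteq> 0"
    proof
      assume "Ea - 1 = 0"
      hence "fps_nth (Ea - 1) 1 = 0" by simp
      thus False using assms(1) by (simp add: Ea_def)
    qed
    ultimately have QxD: "Q x * (fps_const (complex_of_real a) * fps_X) = - (2 * Co * scl a Br)"
      by (simp add: add_eq_0_iff2)
    define S where "S = (\<Sum>i=0..n+1. (if odd i then c i / fact i else 0) * (a^(n+1-i) * fps_nth Br (n+1-i)))"
    have "complex_of_real a * (complex_of_real (poly (P n) x) / fact n)
         = fps_nth (Q x * (fps_const (complex_of_real a) * fps_X)) (Suc n)"
      by (simp add: Q_def mult.commute[of _ "fps_const _ * fps_X"] mult.assoc)
    also have "\<dots> = - 2 * fps_nth (Co * scl a Br) (Suc n)"
      using QxD by (simp add: mult.assoc)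
    also have "fps_nth (Co * scl a Br) (Suc n) = complex_of_real S"
      unfolding S_def by (auto simp add: fps_mult_nth Co_def Cf_def scl_nth intro!: sum.cong)
    finally have "complex_of_real (a * (poly (P n) x / fact n)) = complex_of_real (- 2 * S)"
      by simp
    hence "a * (poly (P n) x / fact n) = - 2 * S" by (simp only: of_real_eq_iff)
    hence "poly (P n) x = fact n / a * (- 2 * S)"
      using assms(1) by (simp add: field_simps)
    also have "\<dots> = - 2 * (fact n / a * S)" by (simp only: mult_ac)
    also have "\<dots> = - 2 * (\<Sum>i=0..n+1. fact n / a * ((if odd i then c i / fact i else 0) * (a^(n+1-i) * fps_nth Br (n+1-i))))"
      unfolding S_def sum_distrib_left ..
    also have "\<dots> = - 2 * (\<Sum>i=0..n+1. if 1 \<le> i \<and> odd i then c i / of_nat i * of_nat (n choose (i - 1)) * a powi (int n - int i)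
                   * bernpoly (n + 1 - i) (x / a) else 0)"
    proof (intro arg_cong[where f="\<lambda>u. -2 * u"] sum.cong refl)
      fix i assume "i \<in> {0..n+1}"
      thus "fact n / a * ((if odd i then c i / fact i else 0) * (a^(n+1-i) * fps_nth Br (n+1-i))) =
        (if 1 \<le> i \<and> odd i then c i / of_nat i * of_nat (n choose (i - 1)) * a powi (int n - int i)
                   * bernpoly (n + 1 - i) (x / a) else 0)"
        using term_even[of i n a "c i" "fps_nth Br (n+1-i)"] assms(1)
        by (cases "odd i") (auto simp: bernpoly_def Br_def g_def h_def elim!: oddE)
    qed
    also have "(\<Sum>i=0..n+1. if 1 \<le> i \<and> odd i then c i / of_nat i * of_nat (n choose (i - 1)) * a powi (int n - int i)
                   * bernpoly (n + 1 - i) (x / a) else 0) = (\<Sum>k | 1 \<le> k \<and> k \<le> n + 1 \<and> odd k.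
                   c k / of_nat k * of_nat (n choose (k - 1)) * a powi (int n - int k)
                   * bernpoly (n + 1 - k) (x / a))"
      by (subst sum.inter_filter[symmetric]) (auto intro!: sum.cong)
    finally show ?thesis .
    qed
  qed
qed

end
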